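(* Let $B_n=\{2\}\cup\{j \text{ odd}: 3\le j\le n-2\}$. There is a constant $C>0$ such that $|D_X(B_n)|\ge C\left(\sqrt{2+2\sqrt2}\right)^n$ for all sufficiently large $n$.
   Context: For $A\subseteq[n]$, $D_X(A)$ is the set of all linear orders $q$ on $[n]$ such that for every triple $i<j<k$ in $[n]$: if $j\in A$ then $i$ is not ranked last among $\{i,j,k\}$ in $q$, and if $j\notin A$ then $k$ is not ranked first among $\{i,j,k\}$ in $q$. ($B_n$ equals $\{2,3,5,\dots,n-3+(n\bmod 2)\}$, the "odd $1N33N1$-alternating scheme".) *)

theory Defs
  imports Complex_Main
begin

text \<open>A linear order q on [n] = {1..n} is a relation with linear_order_on {1..n} q;
  a pair (a,b) in q means that a is ranked at or before b (a comes no later than b).\<close>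

definition ranked_last :: "(nat \<times> nat) set \<Rightarrow> nat \<Rightarrow> nat \<Rightarrow> nat \<Rightarrow> bool" where
  "ranked_last q x y z \<longleftrightarrow> (y, x) \<in> q \<and> (z, x) \<in> q"

definition ranked_first :: "(nat \<times> nat) set \<Rightarrow> nat \<Rightarrow> nat \<Rightarrow> nat \<Rightarrow> bool" where
  "ranked_first q x y z \<longleftrightarrow> (x, y) \<in> q \<and> (x, z) \<in> q"

definition D_X :: "nat \<Rightarrow> nat set \<Rightarrow> (nat \<times> nat) set set" where
  "D_X n A = {q. linear_order_on {1..n} q \<and>
     (\<forall>i j k. 1 \<le> i \<and> i < j \<and> j < k \<and> k \<le> n \<longrightarrow>
        (j \<in> A \<longrightarrow> \<not> ranked_last q i j k) \<and>
        (j \<notin> A \<longrightarrow> \<not> ranked_first q k i j))}"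

definition B :: "nat \<Rightarrow> nat set" where
  "B n = {2} \<union> {j. odd j \<and> 3 \<le> j \<and> j + 2 \<le> n}"

end

theory Submission
  imports Defs
begin


definition tA :: "nat \<Rightarrow> bool" where "tA k \<longleftrightarrow> k = 2 \<or> (odd k \<and> 3 \<le> k)"

definition newst :: "nat \<Rightarrow> nat \<Rightarrow> nat \<Rightarrow> nat" where
 "newst k f c = (if tA k then (if c = 0 then Suc f else 0) else (if c = 0 then 1 else c))"

fun st :: "nat list \<Rightarrow> nat" where
  "st [] = 1"
| "st (c # cs) = newst (length cs + 2) (st cs) c"

fun rk :: "nat list \<Rightarrow> nat \<Rightarrow> nat" where
  "rk [] = (\<lambda>x. 0)"
| "rk (c # cs) = (\<lambda>x. if x = length cs + 2 then length cs + 1 - c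
      else if length cs + 1 - c \<le> rk cs x then Suc (rk cs x) else rk cs x)"

fun valid :: "nat list \<Rightarrow> bool" where
  "valid [] = True"
| "valid (c # cs) = (valid cs \<and> c \<le> st cs)"

definition Inv :: "nat list \<Rightarrow> bool" where
 "Inv cs \<longleftrightarrow> (let N = length cs + 1; r = rk cs; f = st cs in
    (\<forall>x\<in>{1..N}. r x < N) \<and> inj_on r {1..N} \<and> f \<le> N \<and>
    (\<forall>i j. 1 \<le> i \<longrightarrow> i < j \<longrightarrow> j \<le> N \<longrightarrow>
       (tA j \<and> r j < r i \<longrightarrow> r i < N - f) \<and> (\<not> tA j \<longrightarrow> r i < N - f \<or> r j < N - f)) \<and>
    (\<forall>i j k. 1 \<le> i \<longrightarrow> i < j \<longrightarrow> j < k \<longrightarrow> k \<le> N \<longrightarrow>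
       (tA j \<longrightarrow> \<not> (r j < r i \<and> r k < r i)) \<and> (\<not> tA j \<longrightarrow> \<not> (r k < r i \<and> r k < r j))))"

lemma Inv_Nil: "Inv []"
  by (simp add: Inv_def)

lemma Inv_Cons:
  assumes I: "Inv cs" and c: "c \<le> st cs"
  shows "Inv (c # cs)"
proof -
  define N where "N = length cs + 1"
  define r where "r = rk cs"
  define f where "f = st cs"
  define p where "p = N - c"
  define r' where "r' = rk (c # cs)"
  have r'_def2: "r' x = (if x = Suc N then p else if p \<le> r x then Suc (r x) else r x)" for x
    by (simp add: r'_def r_def N_def p_def)
  have b: "\<forall>x\<in>{1..N}. r x < N" and inj: "inj_on r {1..N}" and fN: "f \<le> N"
    and pr: "\<And>i j. 1 \<le> i \<Longrightarrow> i < j \<Longrightarrow> j \<le> N \<Longrightarrow>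
       (tA j \<and> r j < r i \<longrightarrow> r i < N - f) \<and> (\<not> tA j \<longrightarrow> r i < N - f \<or> r j < N - f)"
    and tr: "\<And>i j k. 1 \<le> i \<Longrightarrow> i < j \<Longrightarrow> j < k \<Longrightarrow> k \<le> N \<Longrightarrow>
       (tA j \<longrightarrow> \<not> (r j < r i \<and> r k < r i)) \<and> (\<not> tA j \<longrightarrow> \<not> (r k < r i \<and> r k < r j))"
    using I unfolding Inv_def Let_def N_def r_def f_def by blast+
  have cf: "c \<le> f" using c f_def by simp
  have pge: "N - f \<le> p" using cf fN p_def by simp
  have pN: "p \<le> N" using p_def by simp
  have ord: "r' x < r' y \<longleftrightarrow> r x < r y" if "x \<le> N" "y \<le> N" for x y
    using that by (auto simp: r'_def2)
  have low: "r' x = r x" if "x \<le> N" "r x < p" for x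
    using that by (auto simp: r'_def2)
  have lowiff: "r' x < p \<longleftrightarrow> r x < p" if "x \<le> N" for x
    using that by (auto simp: r'_def2)
  have newk: "r' (Suc N) = p" by (simp add: r'_def2)
  have len: "length (c # cs) + 1 = Suc N" by (simp add: N_def)
  have stn: "st (c # cs) = newst (Suc N) f c" by (simp add: N_def f_def)
  show ?thesis
    unfolding Inv_def Let_def len stn r'_def[symmetric]
  proof (intro conjI allI impI ballI)
    fix x assume "x \<in> {1..Suc N}"
    then show "r' x < Suc N" using b pN by (auto simp: r'_def2)
  next
    show "inj_on r' {1..Suc N}"
    proof (rule inj_onI)
      fix x y assume x: "x \<in> {1..Suc N}" and y: "y \<in> {1..Suc N}" and e: "r' x = r' y"
      show "x = y"
      proof (cases "x = Suc N \<or> y = Suc N")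
        case True
        then show ?thesis using e x y by (auto simp: r'_def2 split: if_splits)
      next
        case False
        then have "x \<in> {1..N}" "y \<in> {1..N}" using x y by auto
        moreover have "r x = r y" using e False by (auto simp: r'_def2 split: if_splits)
        ultimately show ?thesis using inj by (auto dest: inj_onD)
      qed
    qed
  next
    show "newst (Suc N) f c \<le> Suc N" using cf fN by (auto simp: newst_def)
  next
    fix i j assume i: "1 \<le> i" "i < j" "j \<le> Suc N" and tj: "tA j \<and> r' j < r' i"
    show "r' i < Suc N - newst (Suc N) f c"
    proof (cases "j = Suc N")
      case True
      have "r i < N" using b i True by auto
      then show ?thesis using tj i pN True by (auto simp: r'_def2 newst_def p_def split: if_splits)
    next
      case False
      then have jN: "j \<le> N" using i by simp
      have "r j < r i" using tj ord[of j i] jN i by simp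
      then have "r i < N - f" using pr[of i j] i jN tj by blast
      then have "r' i = r i" using low[of i] pge i jN by simp
      then show ?thesis using \<open>r i < N - f\<close> cf fN pge
        by (auto simp: newst_def p_def)
    qed
  next
    fix i j assume i: "1 \<le> i" "i < j" "j \<le> Suc N" and tj: "\<not> tA j"
    show "r' i < Suc N - newst (Suc N) f c \<or> r' j < Suc N - newst (Suc N) f c"
    proof (cases "j = Suc N")
      case True
      have "r i < N" using b i True by auto
      then show ?thesis using tj i pN cf fN True
        by (auto simp: r'_def2 newst_def p_def split: if_splits)
    next
      case False
      then have jN: "j \<le> N" using i by simp
      have "r i < N - f \<or> r j < N - f" using pr[of i j] i jN tj by blast
      then show ?thesis
      proof
        assume h: "r i < N - f"
        then have "r' i = r i" using low[of i] pge i jN by simp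
        then show ?thesis using h cf fN pge by (auto simp: newst_def p_def)
      next
        assume h: "r j < N - f"
        then have "r' j = r j" using low[of j] pge i jN by simp
        then show ?thesis using h cf fN pge by (auto simp: newst_def p_def)
      qed
    qed
  next
    fix i j k assume i: "1 \<le> i" "i < j" "j < k" "k \<le> Suc N" and tj: "tA j"
    show "\<not> (r' j < r' i \<and> r' k < r' i)"
    proof (cases "k = Suc N")
      case True
      show ?thesis
      proof
        assume h: "r' j < r' i \<and> r' k < r' i"
        have jN: "j \<le> N" "i \<le> N" using i True by auto
        have "r j < r i" using h ord[of j i] jN by simp
        then have "r i < N - f" using pr[of i j] i jN tj by blast
        then have "r' i = r i" using low[of i] pge jN by simp
        then show False using h True newk \<open>r i < N - f\<close> pge by simp
      qed
    next
      case False
      then have "k \<le> N" using i by simp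
      then show ?thesis using tr[of i j k] i tj ord by auto
    qed
  next
    fix i j k assume i: "1 \<le> i" "i < j" "j < k" "k \<le> Suc N" and tj: "\<not> tA j"
    show "\<not> (r' k < r' i \<and> r' k < r' j)"
    proof (cases "k = Suc N")
      case True
      show ?thesis
      proof
        assume h: "r' k < r' i \<and> r' k < r' j"
        have jN: "j \<le> N" "i \<le> N" using i True by auto
        have "r i < N - f \<or> r j < N - f" using pr[of i j] i jN tj by blast
        then show False
        proof
          assume h2: "r i < N - f"
          then have "r' i = r i" using low[of i] pge jN by simp
          then show False using h True newk h2 pge by simp
        next
          assume h2: "r j < N - f"
          then have "r' j = r j" using low[of j] pge jN by simp
          then show False using h True newk h2 pge by simp
        qed
      qed
    next
      case False
      then have "k \<le> N" using i by simp
      then show ?thesis using tr[of i j k] i tj ord by auto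
    qed
  qed
qed

lemma valid_Inv: "valid cs \<Longrightarrow> Inv cs"
  by (induction cs) (auto simp: Inv_Nil Inv_Cons)


definition rel :: "(nat \<Rightarrow> nat) \<Rightarrow> nat \<Rightarrow> (nat \<times> nat) set" where
  "rel r N = {(x, y). x \<in> {1..N} \<and> y \<in> {1..N} \<and> r x \<le> r y}"

definition Q :: "nat \<Rightarrow> nat list set" where
  "Q m = {cs. length cs = m \<and> valid cs}"

lemma rank_card:
  assumes inj: "inj_on r {1..N}" and b: "\<forall>x\<in>{1..N}. r x < N" and x: "x \<in> {1..N}"
  shows "card {y\<in>{1..N}. r y < r x} = r x"
proof -
  have im: "r ` {1..N} = {0..<N}"
  proof (rule card_subset_eq)
    show "r ` {1..N} \<subseteq> {0..<N}" using b by auto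
    show "card (r ` {1..N}) = card {0..<N}" using card_image[OF inj] by simp
  qed simp
  have "r ` {y\<in>{1..N}. r y < r x} = {0..<r x}"
  proof
    show "r ` {y \<in> {1..N}. r y < r x} \<subseteq> {0..<r x}" by auto
    show "{0..<r x} \<subseteq> r ` {y \<in> {1..N}. r y < r x}"
    proof
      fix v assume v: "v \<in> {0..<r x}"
      have "r x < N" using b x by auto
      then have "v \<in> r ` {1..N}" using im v by auto
      then show "v \<in> r ` {y \<in> {1..N}. r y < r x}" using v by auto
    qed
  qed
  moreover have "inj_on r {y\<in>{1..N}. r y < r x}" using inj by (rule inj_on_subset) auto
  ultimately show ?thesis using card_image by fastforce
qed

lemma rel_inj:
  assumes "inj_on r1 {1..N}" "\<forall>x\<in>{1..N}. r1 x < N" "inj_on r2 {1..N}" "\<forall>x\<in>{1..N}. r2 x < N"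
    and e: "rel r1 N = rel r2 N" and x: "x \<in> {1..N}"
  shows "r1 x = r2 x"
proof -
  have "{y\<in>{1..N}. r1 y < r1 x} = {y\<in>{1..N}. (x, y) \<notin> rel r1 N}" using x by (auto simp: rel_def)
  also have "\<dots> = {y\<in>{1..N}. (x, y) \<notin> rel r2 N}" using e by simp
  also have "\<dots> = {y\<in>{1..N}. r2 y < r2 x}" using x by (auto simp: rel_def)
  finally show ?thesis using rank_card[OF assms(1,2) x] rank_card[OF assms(3,4) x] by simp
qed

lemma st_le: "valid cs \<Longrightarrow> st cs \<le> length cs + 1"
  using valid_Inv[of cs] by (simp add: Inv_def Let_def)

lemma path_inj:
  "valid cs1 \<Longrightarrow> valid cs2 \<Longrightarrow> length cs1 = length cs2 \<Longrightarrow>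
   (\<forall>x\<in>{1..length cs1 + 1}. rk cs1 x = rk cs2 x) \<Longrightarrow> cs1 = cs2"
proof (induction cs1 arbitrary: cs2)
  case Nil
  then show ?case by simp
next
  case (Cons c1 t1)
  then obtain c2 t2 where cs2: "cs2 = c2 # t2" by (cases cs2) auto
  have v1: "valid t1" "c1 \<le> st t1" and v2: "valid t2" "c2 \<le> st t2" using Cons.prems cs2 by auto
  have len: "length t1 = length t2" using Cons.prems cs2 by simp
  have c1b: "c1 \<le> length t1 + 1" using st_le[OF v1(1)] v1(2) by simp
  have c2b: "c2 \<le> length t1 + 1" using st_le[OF v2(1)] v2(2) len by simp
  have H: "rk (c1 # t1) x = rk (c2 # t2) x" if "x \<in> {1..length t1 + 2}" for x
  proof -
    have "x \<in> {1..length (c1 # t1) + 1}" using that by simp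
    then show ?thesis using Cons.prems(4) cs2 by blast
  qed
  have "rk (c1 # t1) (length t1 + 2) = rk (c2 # t2) (length t1 + 2)"
    by (rule H) simp
  then have "length t1 + 1 - c1 = length t1 + 1 - c2" using len by simp
  then have c: "c1 = c2" using c1b c2b by simp
  have "\<forall>x\<in>{1..length t1 + 1}. rk t1 x = rk t2 x"
  proof
    fix x assume x: "x \<in> {1..length t1 + 1}"
    have "rk (c1 # t1) x = rk (c2 # t2) x" by (rule H) (use x in auto)
    moreover have "x \<noteq> length t1 + 2" using x by simp
    ultimately have "(if length t1 + 1 - c1 \<le> rk t1 x then Suc (rk t1 x) else rk t1 x) =
       (if length t1 + 1 - c1 \<le> rk t2 x then Suc (rk t2 x) else rk t2 x)"
      using c len by simp
    then show "rk t1 x = rk t2 x" by (auto split: if_splits)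
  qed
  then have "t1 = t2" using Cons.IH[OF v1(1) v2(1) len] by simp
  then show ?case using c cs2 by simp
qed

lemma Inv_parts:
  assumes "Inv cs" "N = length cs + 1"
  shows "\<forall>x\<in>{1..N}. rk cs x < N" "inj_on (rk cs) {1..N}"
    "\<And>i j k. 1 \<le> i \<Longrightarrow> i < j \<Longrightarrow> j < k \<Longrightarrow> k \<le> N \<Longrightarrow>
       (tA j \<longrightarrow> \<not> (rk cs j < rk cs i \<and> rk cs k < rk cs i)) \<and> (\<not> tA j \<longrightarrow> \<not> (rk cs k < rk cs i \<and> rk cs k < rk cs j))"
  using assms unfolding Inv_def Let_def by blast+

lemma lin_rel:
  assumes inj: "inj_on r {1..N}"
  shows "linear_order_on {1..N} (rel r N)"
proof -
  have "antisym (rel r N)"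
  proof (rule antisymI)
    fix x y assume "(x, y) \<in> rel r N" "(y, x) \<in> rel r N"
    then have "x \<in> {1..N}" "y \<in> {1..N}" "r x = r y" unfolding rel_def by auto
    then show "x = y" using inj_onD[OF inj] by blast
  qed
  moreover have "refl_on {1..N} (rel r N)" unfolding refl_on_def rel_def by auto
  moreover have "trans (rel r N)" unfolding trans_def rel_def by auto
  moreover have "rel r N \<subseteq> {1..N} \<times> {1..N}" unfolding rel_def by auto
  moreover have "total_on {1..N} (rel r N)" unfolding total_on_def rel_def by auto
  ultimately show ?thesis
    unfolding linear_order_on_def partial_order_on_def preorder_on_def by blast
qed

lemma B_tA:
  assumes "2 \<le> j" "j < n" "odd n \<or> j \<noteq> n - 1"
  shows "j \<in> B n \<longleftrightarrow> tA j"
proof -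
  have "odd j \<and> 3 \<le> j \<Longrightarrow> j + 2 \<le> n"
  proof -
    assume a: "odd j \<and> 3 \<le> j"
    show "j + 2 \<le> n"
    proof (rule ccontr)
      assume "\<not> j + 2 \<le> n"
      then have "j = n - 1" using assms by simp
      then have "odd n \<Longrightarrow> False" using a assms by (simp add: even_diff_nat)  
      then show False using assms \<open>j = n - 1\<close> by blast
    qed
  qed
  then show ?thesis unfolding B_def tA_def by auto
qed

lemma DX_mem:
  assumes v: "valid cs" and n: "n = length cs + 1"
    and par: "odd n \<or> (\<forall>x\<in>{1..n-1}. rk cs x < rk cs n)"
  shows "rel (rk cs) n \<in> D_X n (B n)"
proof -
  have I: "Inv cs" using valid_Inv[OF v] .
  note P = Inv_parts[OF I n]
  show ?thesis
    unfolding D_X_def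
  proof (intro CollectI conjI allI impI)
    show "linear_order_on {1..n} (rel (rk cs) n)" using lin_rel[OF P(2)] .
  next
    fix i j k assume h: "1 \<le> i \<and> i < j \<and> j < k \<and> k \<le> n" and jB: "j \<in> B n"
    show "\<not> ranked_last (rel (rk cs) n) i j k"
    proof
      assume rl: "ranked_last (rel (rk cs) n) i j k"
      then have le: "rk cs j \<le> rk cs i" "rk cs k \<le> rk cs i" unfolding ranked_last_def rel_def by auto
      have lt: "rk cs j < rk cs i" "rk cs k < rk cs i"
        using le h P(2) by (auto dest: inj_onD simp: le_less)
      show False
      proof (cases "odd n \<or> j \<noteq> n - 1")
        case True
        then have "tA j" using B_tA[of j n] jB h by auto
        then show False using P(3)[of i j k] h lt by blast
      next
        case False
        then have "k = n" using h by auto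
        have "i \<in> {1..n-1}" using h by auto
        then have "rk cs i < rk cs n" using par False by auto
        then show False using lt \<open>k = n\<close> by simp
      qed
    qed
  next
    fix i j k assume h: "1 \<le> i \<and> i < j \<and> j < k \<and> k \<le> n" and jB: "j \<notin> B n"
    show "\<not> ranked_first (rel (rk cs) n) k i j"
    proof
      assume rl: "ranked_first (rel (rk cs) n) k i j"
      then have le: "rk cs k \<le> rk cs i" "rk cs k \<le> rk cs j" unfolding ranked_first_def rel_def by auto
      have lt: "rk cs k < rk cs i" "rk cs k < rk cs j"
        using le h P(2) by (auto dest: inj_onD simp: le_less)
      show False
      proof (cases "odd n \<or> j \<noteq> n - 1")
        case True
        then have "\<not> tA j" using B_tA[of j n] jB h by (cases "j = 1") auto
        then show False using P(3)[of i j k] h lt by blast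
      next
        case False
        then have "k = n" using h by auto
        have "i \<in> {1..n-1}" using h by auto
        then have "rk cs i < rk cs n" using par False by auto
        then show False using lt \<open>k = n\<close> by simp
      qed
    qed
  qed
qed

lemma finite_DX: "finite (D_X n A)"
proof (rule finite_subset)
  show "D_X n A \<subseteq> Pow ({1..n} \<times> {1..n})"
    unfolding D_X_def linear_order_on_def partial_order_on_def preorder_on_def refl_on_def by auto
qed simp

lemma finite_Q: "finite (Q m)"
proof (rule finite_subset)
  show "Q m \<subseteq> {cs. set cs \<subseteq> {0..m} \<and> length cs = m}"
  proof
    fix cs assume "cs \<in> Q m"
    then have v: "valid cs" and l: "length cs = m" by (auto simp: Q_def)
    have "set cs \<subseteq> {0..length cs}" using v
    proof (induction cs)
      case (Cons c cs)
      then show ?case using st_le[of cs] by auto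
    qed simp
    then show "cs \<in> {cs. set cs \<subseteq> {0..m} \<and> length cs = m}" using l by auto
  qed
  show "finite {cs. set cs \<subseteq> {0..m} \<and> length cs = m}"
    by (rule finite_lists_length_eq) simp
qed

lemma card_DX_odd:
  assumes "odd n" "n = m + 1"
  shows "card (Q m) \<le> card (D_X n (B n))"
proof -
  have inj: "inj_on (\<lambda>cs. rel (rk cs) n) (Q m)"
  proof (rule inj_onI)
    fix cs1 cs2 assume c: "cs1 \<in> Q m" "cs2 \<in> Q m" and e: "rel (rk cs1) n = rel (rk cs2) n"
    have v: "valid cs1" "valid cs2" "length cs1 = m" "length cs2 = m" using c by (auto simp: Q_def)
    note P1 = Inv_parts[OF valid_Inv[OF v(1)], of n] and P2 = Inv_parts[OF valid_Inv[OF v(2)], of n]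
    have "\<forall>x\<in>{1..n}. rk cs1 x = rk cs2 x"
      using rel_inj[OF P1(2) P1(1) P2(2) P2(1) e] v assms by auto
    then show "cs1 = cs2" using path_inj[OF v(1,2)] v assms by auto
  qed
  have "(\<lambda>cs. rel (rk cs) n) ` Q m \<subseteq> D_X n (B n)"
    using DX_mem assms by (auto simp: Q_def)
  then show ?thesis using card_mono[OF finite_DX] card_image[OF inj] by metis
qed

lemma card_DX_even:
  assumes "n = m + 2"
  shows "card (Q m) \<le> card (D_X n (B n))"
proof -
  have vQ: "valid (0 # cs)" "length (0 # cs) = m + 1" if "cs \<in> Q m" for cs
    using that by (auto simp: Q_def)
  have inj: "inj_on (\<lambda>cs. rel (rk (0 # cs)) n) (Q m)"
  proof (rule inj_onI)
    fix cs1 cs2 assume c: "cs1 \<in> Q m" "cs2 \<in> Q m" and e: "rel (rk (0 # cs1)) n = rel (rk (0 # cs2)) n"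
    note v = vQ[OF c(1)] vQ[OF c(2)]
    note P1 = Inv_parts[OF valid_Inv[OF v(1)], of n] and P2 = Inv_parts[OF valid_Inv[OF v(3)], of n]
    have "\<forall>x\<in>{1..n}. rk (0 # cs1) x = rk (0 # cs2) x"
      using rel_inj[OF P1(2) P1(1) P2(2) P2(1) e] v assms by auto
    then have "0 # cs1 = 0 # cs2" using path_inj[OF v(1) v(3)] v assms by auto
    then show "cs1 = cs2" by simp
  qed
  have "rel (rk (0 # cs)) n \<in> D_X n (B n)" if c: "cs \<in> Q m" for cs
  proof (rule DX_mem)
    show "valid (0 # cs)" "n = length (0 # cs) + 1" using vQ[OF c] assms by auto
    have "\<forall>x\<in>{1..m+1}. rk cs x < m + 1"
      using Inv_parts(1)[OF valid_Inv, of cs "m+1"] c by (auto simp: Q_def)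
    then show "odd n \<or> (\<forall>x\<in>{1..n - 1}. rk (0 # cs) x < rk (0 # cs) n)"
      using c assms by (auto simp: Q_def)
  qed
  then have "(\<lambda>cs. rel (rk (0 # cs)) n) ` Q m \<subseteq> D_X n (B n)" by auto
  then show ?thesis using card_mono[OF finite_DX] card_image[OF inj] by metis
qed



definition cnt :: "nat \<Rightarrow> nat \<Rightarrow> nat" where
  "cnt m g = card {cs \<in> Q m. st cs = g}"

definition Mr :: "nat \<Rightarrow> nat \<Rightarrow> nat \<Rightarrow> real" where
  "Mr k f g = (\<Sum>c\<in>{0..f}. if newst k f c = g then 1 else 0)"

lemma Q_Suc: "Q (Suc m) = (\<lambda>(cs, c). c # cs) ` (SIGMA cs:Q m. {0..st cs})"
proof
  show "Q (Suc m) \<subseteq> (\<lambda>(cs, c). c # cs) ` (SIGMA cs:Q m. {0..st cs})"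
  proof
    fix x assume "x \<in> Q (Suc m)"
    then obtain c cs where x: "x = c # cs" and "length cs = m" "valid cs" "c \<le> st cs"
      unfolding Q_def by (cases x) auto
    then show "x \<in> (\<lambda>(cs, c). c # cs) ` (SIGMA cs:Q m. {0..st cs})"
      unfolding Q_def by (auto intro!: image_eqI[of _ _ "(cs, c)"])
  qed
  show "(\<lambda>(cs, c). c # cs) ` (SIGMA cs:Q m. {0..st cs}) \<subseteq> Q (Suc m)"
    unfolding Q_def by auto
qed

lemma sum_Q_Suc:
  fixes \<phi> :: "nat list \<Rightarrow> real"
  shows "(\<Sum>cs\<in>Q (Suc m). \<phi> cs) = (\<Sum>cs\<in>Q m. \<Sum>c\<in>{0..st cs}. \<phi> (c # cs))"
proof -
  have inj: "inj_on (\<lambda>(cs, c). c # cs) (SIGMA cs:Q m. {0..st cs})"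
    by (auto simp: inj_on_def)
  have "(\<Sum>cs\<in>Q (Suc m). \<phi> cs) = (\<Sum>p\<in>(SIGMA cs:Q m. {0..st cs}). \<phi> ((\<lambda>(cs, c). c # cs) p))"
    unfolding Q_Suc by (rule sum.reindex[OF inj, unfolded comp_def])
  also have "\<dots> = (\<Sum>(cs, c)\<in>(SIGMA cs:Q m. {0..st cs}). \<phi> (c # cs))"
    by (rule sum.cong) auto
  also have "\<dots> = (\<Sum>cs\<in>Q m. \<Sum>c\<in>{0..st cs}. \<phi> (c # cs))"
    by (rule sum.Sigma[symmetric]) (auto simp: finite_Q)
  finally show ?thesis .
qed

lemma st_bound: "cs \<in> Q m \<Longrightarrow> st cs \<le> Suc m"
  using st_le by (auto simp: Q_def)

lemma sum_group_st:
  fixes \<phi> :: "nat \<Rightarrow> real"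
  shows "(\<Sum>cs\<in>Q m. \<phi> (st cs)) = (\<Sum>s\<le>Suc m. \<phi> s * real (cnt m s))"
proof -
  have "(\<Sum>cs\<in>Q m. \<phi> (st cs)) = (\<Sum>s\<in>{..Suc m}. \<Sum>cs\<in>{cs \<in> Q m. st cs = s}. \<phi> (st cs))"
    by (rule sum.group[symmetric]) (auto simp: finite_Q st_bound)
  also have "\<dots> = (\<Sum>s\<le>Suc m. \<phi> s * real (cnt m s))"
    unfolding cnt_def by (rule sum.cong) auto
  finally show ?thesis .
qed

lemma card_Q_sum: "real (card (Q m)) = (\<Sum>s\<le>Suc m. real (cnt m s))"
  using sum_group_st[of "\<lambda>_. 1" m] by simp

lemma cnt_Suc: "real (cnt (Suc m) g) = (\<Sum>f\<le>Suc m. Mr (m + 2) f g * real (cnt m f))"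
proof -
  have "real (cnt (Suc m) g) = (\<Sum>cs\<in>Q (Suc m). if st cs = g then 1 else 0)"
    unfolding cnt_def using sum.inter_filter[OF finite_Q[of "Suc m"], where g="\<lambda>_. 1::real" and P="\<lambda>cs. st cs = g"] by simp
  also have "\<dots> = (\<Sum>cs\<in>Q m. \<Sum>c\<in>{0..st cs}. if st (c # cs) = g then 1 else 0)"
    by (rule sum_Q_Suc)
  also have "\<dots> = (\<Sum>cs\<in>Q m. Mr (m + 2) (st cs) g)"
    unfolding Mr_def by (rule sum.cong) (auto simp: Q_def)
  also have "\<dots> = (\<Sum>f\<le>Suc m. Mr (m + 2) f g * real (cnt m f))"
    by (rule sum_group_st)
  finally show ?thesis .
qed

lemma Mr_nA:
  assumes "\<not> tA k"
  shows "Mr k f g = (if g = 1 then 1 else 0) + (if 1 \<le> g \<and> g \<le> f then 1 else 0)"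
proof -
  have "Mr k f g = (if g = 1 then 1 else 0) + (\<Sum>c\<in>{1..f}. if c = g then 1 else 0)"
    unfolding Mr_def using assms
    by (simp add: sum.atLeast_Suc_atMost newst_def)
  also have "(\<Sum>c\<in>{1..f}. if c = g then 1 else (0::real)) = (if 1 \<le> g \<and> g \<le> f then 1 else 0)"
    by (simp add: sum.delta)
  finally show ?thesis .
qed

lemma Mr_A:
  assumes "tA k"
  shows "Mr k f g = (if g = Suc f then 1 else 0) + (if g = 0 then real f else 0)"
proof -
  have "Mr k f g = (if g = Suc f then 1 else 0) + (\<Sum>c\<in>{1..f}. if g = 0 then 1 else 0)"
    unfolding Mr_def using assms
    by (simp add: sum.atLeast_Suc_atMost newst_def)
  then show ?thesis by simp
qed



definition s2 :: real where "s2 = sqrt 2"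
definition mu :: real where "mu = 2 + 2 * s2"
definition rho :: real where "rho = 1 - s2 / 2"
definition th :: real where "th = s2 - 1"

lemma s2_sq: "s2 * s2 = 2" unfolding s2_def by simp
lemma s2_gt1: "1 < s2" unfolding s2_def by (simp add: real_less_rsqrt)
lemma s2_lt2: "s2 < 2"
proof -
  have "sqrt 2 < sqrt 4" by (simp only: real_sqrt_less_iff)
  then show ?thesis unfolding s2_def by (simp add: real_sqrt_four)
qed
lemma rho_pos: "0 < rho" using s2_lt2 unfolding rho_def by simp
lemma rho_lt1: "rho < 1" using s2_gt1 unfolding rho_def by simp
lemma mu_rho: "mu * rho = s2" unfolding mu_def rho_def using s2_sq by (simp add: algebra_simps)
lemma s2_rho: "s2 * rho = th" unfolding th_def rho_def using s2_sq by (simp add: algebra_simps)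
lemma one_rho: "s2 * (1 - rho) = 1" unfolding rho_def using s2_sq by (simp add: algebra_simps)
lemma inv_one_rho: "1 / (1 - rho) = s2" using one_rho rho_lt1 by (simp add: field_simps)
lemma mu_th: "mu * th = 2" unfolding mu_def th_def using s2_sq by (simp add: algebra_simps)
lemma th_pos: "0 < th" using s2_gt1 unfolding th_def by simp
lemma th_lt1: "th < 1" using s2_lt2 unfolding th_def by simp
lemma mu_pos: "0 < mu" using s2_gt1 unfolding mu_def by simp

lemma geo_exact:
  fixes x :: real
  shows "(1 - x) * (\<Sum>s\<le>L. if K < s then x ^ (s - 1) else 0) = (if L \<le> K then 0 else x ^ K - x ^ L)"
proof (induction L)
  case 0
  then show ?case by simp
next
  case (Suc L)
  show ?case
  proof (cases "Suc L \<le> K")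
    case True
    then show ?thesis using Suc by (simp add: distrib_left)
  next
    case False
    then have KL: "K \<le> L" by simp
    have "(\<Sum>s\<le>Suc L. if K < s then x ^ (s - 1) else 0) = (\<Sum>s\<le>L. if K < s then x ^ (s - 1) else 0) + x ^ L"
      using KL by simp
    then have "(1 - x) * (\<Sum>s\<le>Suc L. if K < s then x ^ (s - 1) else 0)
        = (if L \<le> K then 0 else x ^ K - x ^ L) + (1 - x) * x ^ L"
      using Suc by (simp add: distrib_left)
    also have "\<dots> = x ^ K - x ^ Suc L" using KL by (cases "L = K") (auto simp: algebra_simps)
    finally show ?thesis using False by simp
  qed
qed

lemma geo:
  fixes x :: real
  assumes "0 \<le> x" "x < 1"
  shows "(\<Sum>s\<le>L. if K < s then x ^ (s - 1) else 0) \<le> x ^ K / (1 - x)"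
proof -
  have "(1 - x) * (\<Sum>s\<le>L. if K < s then x ^ (s - 1) else 0) \<le> x ^ K"
    using geo_exact[where x=x and L=L and K=K] assms by (simp add: zero_le_power)
  then show ?thesis using assms by (simp add: field_simps mult.commute)
qed

lemma der_exact:
  fixes x :: real
  shows "(1 - x)^2 * (\<Sum>t\<le>L. real t * x ^ (t - 1)) = 1 - real (L + 1) * x ^ L + real L * x ^ (L + 1)"
proof (induction L)
  case 0
  then show ?case by simp
next
  case (Suc L)
  have "(1 - x)^2 * (\<Sum>t\<le>Suc L. real t * x ^ (t - 1))
      = (1 - x)^2 * (\<Sum>t\<le>L. real t * x ^ (t - 1)) + (1 - x)^2 * (real (Suc L) * x ^ L)"
    by (simp add: distrib_left)
  also have "\<dots> = 1 - real (L + 1) * x ^ L + real L * x ^ (L + 1) + (1 - x)^2 * (real (Suc L) * x ^ L)"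
    using Suc by simp
  also have "\<dots> = 1 - real (Suc L + 1) * x ^ Suc L + real (Suc L) * x ^ (Suc L + 1)"
    by (simp add: power2_eq_square algebra_simps)
  finally show ?case .
qed

lemma der:
  fixes x :: real
  assumes "0 \<le> x" "x < 1"
  shows "(\<Sum>t\<le>L. real t * x ^ (t - 1)) \<le> 1 / (1 - x)^2"
proof -
  have "real L * x ^ (L + 1) \<le> real (L + 1) * x ^ L"
  proof -
    have "x ^ (L + 1) \<le> x ^ L" using assms by (simp add: mult_left_le_one_le)
    then show ?thesis using assms by (intro mult_mono) auto
  qed
  then have "(1 - x)^2 * (\<Sum>t\<le>L. real t * x ^ (t - 1)) \<le> 1"
    using der_exact[of x L] by simp
  moreover have "0 < (1 - x)^2" using assms by simp
  ultimately show ?thesis by (simp add: field_simps mult.commute)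
qed


definition w :: "nat \<Rightarrow> real" where "w f = mu * s2 ^ f - real f - 1 - 2 * s2"
definition wo :: "nat \<Rightarrow> real" where "wo t = mu * (s2 ^ Suc t - 1)"
definition u :: "nat \<Rightarrow> real" where "u f = (if f = 0 then 2 * rho else if f = 1 then 0 else rho ^ (f - 1))"
definition uo :: "nat \<Rightarrow> real" where "uo t = (if t = 0 then 0 else s2 * rho ^ (t - 1))"

lemma w0: "w 0 = 1" unfolding w_def mu_def by simp

lemma w_ge: "real f + 1 \<le> w f"
proof -
  have "1 + real f * (s2 - 1) \<le> (1 + (s2 - 1)) ^ f"
    by (rule Bernoulli_inequality) (use s2_gt1 in simp)
  then have "1 + real f * (s2 - 1) \<le> s2 ^ f" by simp
  then have "mu * (1 + real f * (s2 - 1)) \<le> mu * s2 ^ f" using mu_pos by simp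
  moreover have "mu * (1 + real f * (s2 - 1)) = mu + real f * (mu * (s2 - 1))"
    by (simp add: algebra_simps)
  moreover have "mu * (s2 - 1) = 2" using mu_th unfolding th_def .
  ultimately show ?thesis unfolding w_def mu_def by simp
qed

lemma w_le: "w f \<le> mu * s2 ^ f" unfolding w_def using s2_gt1 by simp

lemma I1_aux: "(\<Sum>c\<in>{1..f}. wo c) = mu * w f - wo 1"
proof (induction f)
  case 0
  then show ?case unfolding w_def wo_def using s2_sq by (simp add: power2_eq_square mu_def)
next
  case (Suc f)
  have "(\<Sum>c\<in>{1..Suc f}. wo c) = mu * w f - wo 1 + wo (Suc f)" using Suc by simp
  also have "\<dots> = mu * w (Suc f) - wo 1"
  proof -
    have e1: "w (Suc f) - w f = mu * (s2 - 1) * s2 ^ f - 1" unfolding w_def by (simp add: algebra_simps)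
    have "mu * (s2 - 1) = 2" using mu_th unfolding th_def .
    then have e2: "w (Suc f) - w f = 2 * s2 ^ f - 1" using e1 by simp
    have "s2 ^ Suc (Suc f) = 2 * s2 ^ f" using s2_sq by (simp add: mult.assoc[symmetric])
    then have e3: "wo (Suc f) = mu * (2 * s2 ^ f - 1)" unfolding wo_def by simp
    have "mu * (w (Suc f) - w f) = wo (Suc f)" using e2 e3 by simp
    then show ?thesis by (simp add: algebra_simps)
  qed
  finally show ?case .
qed

lemma I1:
  assumes "\<not> tA k"
  shows "(\<Sum>c\<in>{0..f}. wo (newst k f c)) = mu * w f"
proof -
  have "(\<Sum>c\<in>{0..f}. wo (newst k f c)) = wo 1 + (\<Sum>c\<in>{1..f}. wo c)"
    using assms by (simp add: sum.atLeast_Suc_atMost newst_def)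
  then show ?thesis using I1_aux by simp
qed

lemma I2:
  assumes "tA k"
  shows "(\<Sum>c\<in>{0..f}. w (newst k f c)) = wo f"
proof -
  have "(\<Sum>c\<in>{0..f}. w (newst k f c)) = w (Suc f) + (\<Sum>c\<in>{1..f}. w 0)"
    using assms by (simp add: sum.atLeast_Suc_atMost newst_def)
  also have "\<dots> = w (Suc f) + real f" using w0 by simp
  also have "\<dots> = wo f" unfolding w_def wo_def mu_def by (simp add: algebra_simps)
  finally show ?thesis .
qed

lemma u_nonneg: "0 \<le> u f" unfolding u_def using rho_pos by simp
lemma uo_nonneg: "0 \<le> uo f" unfolding uo_def using rho_pos s2_gt1 by simp

lemma Mr_nonneg: "0 \<le> Mr k f g" unfolding Mr_def by (rule sum_nonneg) simp

lemma U1: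
  assumes "\<not> tA k"
  shows "(\<Sum>f\<le>L. Mr k f g * u f) \<le> uo g"
proof -
  have M: "Mr k f g = (if g = 1 then 1 else 0) + (if 1 \<le> g \<and> g \<le> f then 1 else 0)" for f
    using Mr_nA[OF assms] .
  consider "g = 0" | "g = 1" | "2 \<le> g" by linarith
  then show ?thesis
  proof cases
    case 1
    then show ?thesis using M by (simp add: uo_def)
  next
    case 2
    have pt: "Mr k f g * u f = (if f = 0 then 2 * rho else 0) + 2 * (if 1 < f then rho ^ (f - 1) else 0)" for f
      using 2 M[of f] by (auto simp: u_def)
    have "(\<Sum>f\<le>L. Mr k f g * u f) = (\<Sum>f\<le>L. (if f = 0 then 2 * rho else 0)) + 2 * (\<Sum>f\<le>L. if 1 < f then rho ^ (f - 1) else 0)"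
      unfolding pt by (simp add: sum.distrib sum_distrib_left)
    also have "\<dots> \<le> 2 * rho + 2 * (rho ^ 1 / (1 - rho))"
      using geo[OF less_imp_le[OF rho_pos] rho_lt1, where L=L and K=1] by simp
    also have "\<dots> = s2"
    proof -
      have "rho ^ 1 / (1 - rho) = rho * (1 / (1 - rho))" by simp
      also have "\<dots> = s2 - 1" using inv_one_rho s2_rho unfolding th_def by (simp add: mult.commute)
      finally have "rho ^ 1 / (1 - rho) = s2 - 1" .
      then show ?thesis unfolding rho_def by simp
    qed
    finally show ?thesis using 2 by (simp add: uo_def)
  next
    case 3
    have pt: "Mr k f g * u f = (if g - 1 < f then rho ^ (f - 1) else 0)" for f
      using 3 M[of f] by (auto simp: u_def)
    have "(\<Sum>f\<le>L. Mr k f g * u f) \<le> rho ^ (g - 1) / (1 - rho)"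
      unfolding pt using geo[OF less_imp_le[OF rho_pos] rho_lt1, where L=L and K="g - 1"] by simp
    also have "\<dots> = rho ^ (g - 1) * (1 / (1 - rho))" by simp
    also have "\<dots> = uo g" using 3 inv_one_rho by (simp add: uo_def mult.commute)
    finally show ?thesis .
  qed
qed

lemma U2:
  assumes "tA k"
  shows "(\<Sum>t\<le>L. Mr k t g * uo t) \<le> mu * u g"
proof -
  have M: "Mr k t g = (if g = Suc t then 1 else 0) + (if g = 0 then real t else 0)" for t
    using Mr_A[OF assms] .
  consider "g = 0" | "g = 1" | "2 \<le> g" by linarith
  then show ?thesis
  proof cases
    case 1
    have pt: "Mr k t g * uo t = s2 * (real t * rho ^ (t - 1))" for t
      using 1 M[of t] by (auto simp: uo_def)
    have "(\<Sum>t\<le>L. Mr k t g * uo t) = s2 * (\<Sum>t\<le>L. real t * rho ^ (t - 1))"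
      unfolding pt by (simp add: sum_distrib_left)
    also have "\<dots> \<le> s2 * (1 / (1 - rho)^2)"
      using mult_left_mono[OF der[OF less_imp_le[OF rho_pos] rho_lt1, where L=L], of s2] s2_gt1 by simp
    also have "\<dots> = mu * u g"
    proof -
      have "1 / (1 - rho)^2 = (1 / (1 - rho))^2" by (simp add: power_one_over)
      then have "1 / (1 - rho)^2 = s2 * s2" using inv_one_rho by (simp add: power2_eq_square)
      then show ?thesis using 1 s2_sq mu_rho by (simp add: u_def algebra_simps)
    qed
    finally show ?thesis .
  next
    case 2
    have pt: "Mr k t g * uo t = 0" for t
      using 2 M[of t] by (auto simp: uo_def)
    show ?thesis unfolding pt using 2 by (simp add: u_def)
  next
    case 3
    have pt: "Mr k t g * uo t = (if t = g - 1 then uo (g - 1) else 0)" for t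
      using 3 M[of t] by auto
    have "(\<Sum>t\<le>L. Mr k t g * uo t) \<le> uo (g - 1)"
      unfolding pt using uo_nonneg by simp
    also have "\<dots> = mu * u g"
    proof -
      have "g - 1 - 1 = g - 2" by simp
      then have "uo (g - 1) = s2 * rho ^ (g - 2)" using 3 unfolding uo_def by simp
      also have "\<dots> = mu * (rho * rho ^ (g - 2))" using mu_rho by (simp add: algebra_simps)
      also have "\<dots> = mu * rho ^ Suc (g - 2)" by simp
      also have "Suc (g - 2) = g - 1" using 3 by simp
      finally show ?thesis using 3 by (simp add: u_def)
    qed
    finally show ?thesis .
  qed
qed



definition W :: "nat \<Rightarrow> real" where "W m = (\<Sum>cs\<in>Q m. w (st cs))"

lemma st_Cons_Q: "cs \<in> Q m \<Longrightarrow> st (c # cs) = newst (m + 2) (st cs) c"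
  by (simp add: Q_def)

lemma tA_odd: "odd k \<Longrightarrow> 3 \<le> k \<Longrightarrow> tA k" by (simp add: tA_def)
lemma tA_even: "even k \<Longrightarrow> 4 \<le> k \<Longrightarrow> \<not> tA k" by (auto simp: tA_def)

lemma W_step:
  assumes "even m" "2 \<le> m"
  shows "W (m + 2) = mu * W m"
proof -
  have "W (m + 2) = (\<Sum>cs\<in>Q (Suc m). \<Sum>c\<in>{0..st cs}. w (st (c # cs)))"
    unfolding W_def using sum_Q_Suc[of "\<lambda>cs. w (st cs)" "Suc m"] by simp
  also have "\<dots> = (\<Sum>cs\<in>Q (Suc m). \<Sum>c\<in>{0..st cs}. w (newst (m + 3) (st cs) c))"
    by (rule sum.cong) (auto simp: Q_def numeral_3_eq_3 numeral_2_eq_2)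
  also have "\<dots> = (\<Sum>cs\<in>Q (Suc m). wo (st cs))"
    using I2[OF tA_odd[of "m + 3"]] assms by simp
  also have "\<dots> = (\<Sum>cs\<in>Q m. \<Sum>c\<in>{0..st cs}. wo (st (c # cs)))"
    using sum_Q_Suc[of "\<lambda>cs. wo (st cs)" m] by simp
  also have "\<dots> = (\<Sum>cs\<in>Q m. \<Sum>c\<in>{0..st cs}. wo (newst (m + 2) (st cs) c))"
    by (rule sum.cong) (auto simp: Q_def numeral_3_eq_3 numeral_2_eq_2)
  also have "\<dots> = (\<Sum>cs\<in>Q m. mu * w (st cs))"
    using I1[OF tA_even[of "m + 2"]] assms by simp
  also have "\<dots> = mu * W m" unfolding W_def by (simp add: sum_distrib_left)
  finally show ?thesis .
qed

lemma W_pow: "W (4 + 2 * i) = mu ^ i * W 4"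
proof (induction i)
  case 0
  then show ?case by simp
next
  case (Suc i)
  have "W (4 + 2 * Suc i) = W ((4 + 2 * i) + 2)" by simp
  also have "\<dots> = mu * W (4 + 2 * i)" by (rule W_step) auto
  finally show ?case using Suc by simp
qed

lemma Q_ne: "replicate m 0 \<in> Q m"
  unfolding Q_def by (induction m) auto

lemma card_Q_pos: "0 < card (Q m)"
  using Q_ne[of m] finite_Q[of m] card_gt_0_iff by blast

lemma W4_pos: "0 < W 4"
proof -
  have "(\<Sum>cs\<in>Q 4. (1::real)) \<le> W 4"
    unfolding W_def by (rule sum_mono) (use w_ge in \<open>smt (verit) of_nat_0_le_iff\<close>)
  moreover have "(\<Sum>cs\<in>Q 4. (1::real)) > 0" using card_Q_pos[of 4] by simp
  ultimately show ?thesis by linarith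
qed

definition Bc :: real where "Bc = real (card (Q 3)) / (s2 * rho ^ 3)"

lemma Bc_pos: "0 < Bc"
  unfolding Bc_def using card_Q_pos[of 3] s2_gt1 rho_pos by simp

lemma cnt_base: "real (cnt 3 g) \<le> Bc * uo g"
proof -
  consider "g = 0" | "4 < g" | "1 \<le> g" "g \<le> 4" by linarith
  then show ?thesis
  proof cases
    case 1
    have "{cs \<in> Q 3. st cs = g} = {}"
    proof (rule ccontr)
      assume "{cs \<in> Q 3. st cs = g} \<noteq> {}"
      then obtain cs where cs: "cs \<in> Q 3" "st cs = 0" using 1 by auto
      then obtain c t where ct: "cs = c # t" "t \<in> Q 2" by (cases cs) (auto simp: Q_def)
      then have "st cs = newst 4 (st t) c" by (simp add: Q_def)
      then show False using cs tA_even[of 4] by (auto simp: newst_def split: if_splits)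
    qed
    then have "cnt 3 g = 0" unfolding cnt_def by (simp only: card.empty)
    then show ?thesis using Bc_pos uo_nonneg[of g] by simp
  next
    case 2
    have "{cs \<in> Q 3. st cs = g} = {}" using st_bound[of _ 3] 2 by fastforce
    then have "cnt 3 g = 0" unfolding cnt_def by (simp only: card.empty)
    then show ?thesis using Bc_pos uo_nonneg[of g] by simp
  next
    case 3
    have "cnt 3 g \<le> card (Q 3)" unfolding cnt_def by (rule card_mono[OF finite_Q]) auto
    moreover have "real (card (Q 3)) \<le> Bc * uo g"
    proof -
      have "rho ^ 3 \<le> rho ^ (g - 1)"
        using 3 rho_pos rho_lt1 by (intro power_decreasing) auto
      then have "s2 * rho ^ 3 \<le> s2 * rho ^ (g - 1)" using s2_gt1 by simp
      moreover have "real (card (Q 3)) = Bc * (s2 * rho ^ 3)"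
        unfolding Bc_def using s2_gt1 rho_pos by simp
      ultimately show ?thesis using 3 Bc_pos by (simp add: uo_def)
    qed
    ultimately show ?thesis by linarith
  qed
qed

lemma cnt_ind:
  "(\<forall>g. real (cnt (3 + 2 * i) g) \<le> Bc * mu ^ i * uo g) \<and>
   (\<forall>g. real (cnt (4 + 2 * i) g) \<le> Bc * mu ^ (i + 1) * u g)"
proof (induction i)
  case 0
  have A: "\<forall>g. real (cnt 3 g) \<le> Bc * uo g" using cnt_base by simp
  moreover have "\<forall>g. real (cnt 4 g) \<le> Bc * mu * u g"
  proof
    fix g
    have "real (cnt (Suc 3) g) = (\<Sum>f\<le>Suc 3. Mr (3 + 2) f g * real (cnt 3 f))" by (rule cnt_Suc)
    also have "\<dots> \<le> (\<Sum>f\<le>Suc 3. Mr (3 + 2) f g * (Bc * uo f))"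
      by (rule sum_mono, rule mult_left_mono) (use A Mr_nonneg in auto)
    also have "\<dots> = Bc * (\<Sum>f\<le>Suc 3. Mr (3 + 2) f g * uo f)" by (simp add: sum_distrib_left algebra_simps)
    also have "\<dots> \<le> Bc * (mu * u g)"
      using U2[OF tA_odd[of "3 + 2"], where L="Suc 3" and g=g] Bc_pos by (intro mult_left_mono) auto
    finally show "real (cnt 4 g) \<le> Bc * mu * u g" by (simp add: numeral_eq_Suc algebra_simps)
  qed
  ultimately show ?case by simp
next
  case (Suc i)
  have B: "\<forall>g. real (cnt (4 + 2 * i) g) \<le> Bc * mu ^ (i + 1) * u g" using Suc by blast
  have A': "\<forall>g. real (cnt (3 + 2 * Suc i) g) \<le> Bc * mu ^ Suc i * uo g"
  proof
    fix g
    have "real (cnt (Suc (4 + 2 * i)) g) = (\<Sum>f\<le>Suc (4 + 2 * i). Mr (4 + 2 * i + 2) f g * real (cnt (4 + 2 * i) f))"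
      by (rule cnt_Suc)
    also have "\<dots> \<le> (\<Sum>f\<le>Suc (4 + 2 * i). Mr (4 + 2 * i + 2) f g * (Bc * mu ^ (i + 1) * u f))"
      by (rule sum_mono, rule mult_left_mono) (use B Mr_nonneg in auto)
    also have "\<dots> = Bc * mu ^ (i + 1) * (\<Sum>f\<le>Suc (4 + 2 * i). Mr (4 + 2 * i + 2) f g * u f)"
      by (simp add: sum_distrib_left algebra_simps)
    also have "\<dots> \<le> Bc * mu ^ (i + 1) * uo g"
      using U1[OF tA_even[of "4 + 2 * i + 2"], where L="Suc (4 + 2 * i)" and g=g] Bc_pos mu_pos
      by (intro mult_left_mono) auto
    finally show "real (cnt (3 + 2 * Suc i) g) \<le> Bc * mu ^ Suc i * uo g" by simp
  qed
  have "\<forall>g. real (cnt (4 + 2 * Suc i) g) \<le> Bc * mu ^ (Suc i + 1) * u g"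
  proof
    fix g
    have "real (cnt (Suc (3 + 2 * Suc i)) g) = (\<Sum>f\<le>Suc (3 + 2 * Suc i). Mr (3 + 2 * Suc i + 2) f g * real (cnt (3 + 2 * Suc i) f))"
      by (rule cnt_Suc)
    also have "\<dots> \<le> (\<Sum>f\<le>Suc (3 + 2 * Suc i). Mr (3 + 2 * Suc i + 2) f g * (Bc * mu ^ Suc i * uo f))"
      by (rule sum_mono, rule mult_left_mono) (use A' Mr_nonneg in auto)
    also have "\<dots> = Bc * mu ^ Suc i * (\<Sum>f\<le>Suc (3 + 2 * Suc i). Mr (3 + 2 * Suc i + 2) f g * uo f)"
      by (simp add: sum_distrib_left algebra_simps)
    also have "\<dots> \<le> Bc * mu ^ Suc i * (mu * u g)"
      using U2[OF tA_odd[of "3 + 2 * Suc i + 2"], where L="Suc (3 + 2 * Suc i)" and g=g] Bc_pos mu_pos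
      by (intro mult_left_mono) auto
    finally show "real (cnt (4 + 2 * Suc i) g) \<le> Bc * mu ^ (Suc i + 1) * u g"
      by (simp add: algebra_simps)
  qed
  with A' show ?case by blast
qed



lemma u_ge2: "2 \<le> s \<Longrightarrow> u s = rho ^ (s - 1)" by (simp add: u_def)

lemma card_Q_lower: "\<exists>c>0. \<forall>i. c * mu ^ i \<le> real (card (Q (4 + 2 * i)))"
proof -
  define y where "y = W 4 * (1 - th) / (2 * Bc * mu^2 * s2)"
  have ypos: "0 < y" unfolding y_def using W4_pos th_lt1 Bc_pos mu_pos s2_gt1 by simp
  obtain K0 where K0: "th ^ K0 < y" using real_arch_pow_inv[OF ypos th_lt1] by blast
  define K where "K = Suc K0"
  have thK: "th ^ K \<le> th ^ K0" unfolding K_def using th_pos th_lt1 by (intro power_decreasing) auto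
  have tailc: "Bc * mu^2 * s2 * (th ^ K / (1 - th)) \<le> W 4 / 2"
  proof -
    have "th ^ K \<le> W 4 * (1 - th) / (2 * Bc * mu^2 * s2)" using thK K0 y_def by simp
    then have "th ^ K * (2 * Bc * mu^2 * s2) \<le> W 4 * (1 - th)"
      using Bc_pos mu_pos s2_gt1 by (simp add: pos_le_divide_eq)
    then show ?thesis using th_lt1 by (simp add: field_simps)
  qed
  define c where "c = W 4 / (2 * (mu * s2 ^ K))"
  have cpos: "0 < c" unfolding c_def using W4_pos mu_pos s2_gt1 by simp
  have "c * mu ^ i \<le> real (card (Q (4 + 2 * i)))" for i
  proof -
    define m where "m = 4 + 2 * i"
    have cb: "real (cnt m s) \<le> Bc * mu ^ (i + 1) * u s" for s
      using cnt_ind[of i] m_def by blast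
    have "mu ^ i * W 4 = W m" using W_pow m_def by simp
    also have "\<dots> = (\<Sum>s\<le>Suc m. w s * real (cnt m s))" unfolding W_def by (rule sum_group_st)
    also have "\<dots> = (\<Sum>s\<le>Suc m. if s \<le> K then w s * real (cnt m s) else 0)
                   + (\<Sum>s\<le>Suc m. if K < s then w s * real (cnt m s) else 0)"
      by (auto simp: sum.distrib[symmetric] intro!: sum.cong)
    also have "(\<Sum>s\<le>Suc m. if s \<le> K then w s * real (cnt m s) else 0) \<le> (\<Sum>s\<le>Suc m. (mu * s2 ^ K) * real (cnt m s))"
    proof (rule sum_mono)
      fix s assume "s \<in> {..Suc m}"
      show "(if s \<le> K then w s * real (cnt m s) else 0) \<le> mu * s2 ^ K * real (cnt m s)"
      proof (cases "s \<le> K")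
        case True
        have "w s \<le> mu * s2 ^ K"
          using w_le[of s] mu_pos s2_gt1 True power_increasing[of s K s2] by (smt (verit) mult_left_mono)
        then show ?thesis using True by (simp add: mult_right_mono)
      next
        case False
        then show ?thesis using mu_pos s2_gt1 by simp
      qed
    qed
    also have "\<dots> = mu * s2 ^ K * real (card (Q m))" by (simp only: card_Q_sum sum_distrib_left)
    also have "(\<Sum>s\<le>Suc m. if K < s then w s * real (cnt m s) else 0)
          \<le> (\<Sum>s\<le>Suc m. (Bc * mu ^ (i + 2) * s2) * (if K < s then th ^ (s - 1) else 0))"
    proof (rule sum_mono)
      fix s assume "s \<in> {..Suc m}"
      show "(if K < s then w s * real (cnt m s) else 0) \<le> (Bc * mu ^ (i + 2) * s2) * (if K < s then th ^ (s - 1) else 0)"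
      proof (cases "K < s")
        case True
        then have s2le: "2 \<le> s" unfolding K_def by simp
        have "w s * real (cnt m s) \<le> (mu * s2 ^ s) * (Bc * mu ^ (i + 1) * u s)"
          using w_le[of s] cb[of s] w_ge[of s] by (intro mult_mono) auto
        also have "\<dots> = Bc * mu ^ (i + 2) * s2 * th ^ (s - 1)"
        proof -
          have "s2 ^ s = s2 * s2 ^ (s - 1)" using s2le by (metis Suc_diff_1 less_le_trans pos2 power_Suc zero_less_numeral less_numeral_extra(1))
          moreover have "s2 ^ (s - 1) * rho ^ (s - 1) = th ^ (s - 1)" using s2_rho by (simp add: power_mult_distrib[symmetric])
          ultimately show ?thesis using u_ge2[OF s2le] by (simp add: algebra_simps)
        qed
        finally show ?thesis using True by simp
      next
        case False
        then show ?thesis by simp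
      qed
    qed
    also have "\<dots> = (Bc * mu ^ (i + 2) * s2) * (\<Sum>s\<le>Suc m. if K < s then th ^ (s - 1) else 0)"
      by (rule sum_distrib_left[symmetric])
    also have "\<dots> \<le> (Bc * mu ^ (i + 2) * s2) * (th ^ K / (1 - th))"
      using geo[OF less_imp_le[OF th_pos] th_lt1, where L="Suc m" and K=K] Bc_pos mu_pos s2_gt1
      by (intro mult_left_mono) auto
    also have "\<dots> = mu ^ i * (Bc * mu^2 * s2 * (th ^ K / (1 - th)))" by (simp add: power_add power2_eq_square)
    also have "\<dots> \<le> mu ^ i * (W 4 / 2)" using tailc mu_pos by (intro mult_left_mono) auto
    finally have "mu ^ i * W 4 / 2 \<le> mu * s2 ^ K * real (card (Q m))" by simp
    then have "mu ^ i * W 4 / (2 * (mu * s2 ^ K)) \<le> real (card (Q m))"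
      using mu_pos s2_gt1 by (simp add: field_simps)
    then show ?thesis unfolding c_def m_def by (simp add: field_simps)
  qed
  then show ?thesis using cpos by blast
qed


theorem proposition12:
  shows "\<exists>C::real. C > 0 \<and> (\<exists>N. \<forall>n\<ge>N.
           real (card (D_X n (B n))) \<ge> C * (sqrt (2 + 2 * sqrt 2)) ^ n)"
proof -
  obtain c where cpos: "0 < c" and cQ: "\<And>i. c * mu ^ i \<le> real (card (Q (4 + 2 * i)))"
    using card_Q_lower by blast
  define lam where "lam = sqrt (2 + 2 * sqrt 2)"
  have lam2: "lam ^ 2 = mu" unfolding lam_def mu_def s2_def by simp
  have lam1: "1 \<le> lam" unfolding lam_def by simp
  have lampos: "0 < lam" using lam1 by simp
  have lampow: "lam ^ (k + 2 * i) = lam ^ k * mu ^ i" for k i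
    by (simp add: power_add power_mult lam2)
  define C where "C = c / lam ^ 6"
  have Cpos: "0 < C" unfolding C_def using cpos lampos by simp
  have "\<forall>n\<ge>5. real (card (D_X n (B n))) \<ge> C * lam ^ n"
  proof (intro allI impI)
    fix n :: nat assume n5: "5 \<le> n"
    show "C * lam ^ n \<le> real (card (D_X n (B n)))"
    proof (cases "odd n")
      case True
      define i where "i = (n - 5) div 2"
      have ni: "n = 5 + 2 * i" unfolding i_def using True n5 by presburger
      have "card (Q (4 + 2 * i)) \<le> card (D_X n (B n))"
        by (rule card_DX_odd) (use True ni in auto)
      moreover have "C * lam ^ n \<le> c * mu ^ i"
      proof -
        have "C * lam ^ n = c * mu ^ i / lam" unfolding C_def ni lampow
          using lampos by (simp add: field_simps eval_nat_numeral)
        also have "\<dots> \<le> c * mu ^ i" using lam1 cpos mu_pos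
          by (simp add: divide_le_eq)
        finally show ?thesis .
      qed
      ultimately show ?thesis using cQ[of i] by linarith
    next
      case False
      define i where "i = (n - 6) div 2"
      have ni: "n = 6 + 2 * i" unfolding i_def using False n5 by presburger
      have "card (Q (4 + 2 * i)) \<le> card (D_X n (B n))"
        by (rule card_DX_even) (use ni in auto)
      moreover have "C * lam ^ n = c * mu ^ i" unfolding C_def ni lampow
        using lampos by simp
      ultimately show ?thesis using cQ[of i] by linarith
    qed
  qed
  then show ?thesis using Cpos unfolding lam_def by blast
qed

end
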